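(* For every integer $n\ge 3$, $M_n$ equals the largest odd integer that is less than or equal to $$12n - 2\sqrt{18n-12} - 6.$$ Equivalently: (i) every impossibly burnable $n$-path forest $(l_1,\dots,l_n)$ with $l_1\le l_2\le\cdots\le l_n$ satisfies $l_1\le 12n-2\sqrt{18n-12}-6$ and $l_1$ is at most the largest odd integer below this bound; and (ii) there exists an impossibly burnable $n$-path forest whose shortest path has order exactly the largest odd integer $\le 12n-2\sqrt{18n-12}-6$.
   Context: A path forest is a disjoint union of paths; an $n$-path forest is a path forest with exactly $n$ paths, represented by the tuple $(l_1,\dots,l_n)$ of the orders (numbers of vertices) of its paths, usually ordered so that $l_1\le l_2\le\cdots\le l_n$; $l_1$ is the order of its shortest path. All path forests considered have total order $\sum_i l_i=m^2$ for some positive integer $m$. For $m\in\mathbb{N}$ and an integer $1\le l\le m^2$, let $B_m(l)$ be the least positive integer $t$ with $t\equiv l \pmod 2$ such that $l\le \sum_{i=1}^t (2m-(2i-1)) = 2mt-t^2$. An $n$-path forest $(l_1,\dots,l_n)$ of order $m^2$ is called impossibly burnable if $\sum_{i=1}^n B_m(l_i)>m$. For $n\ge 2$, $M_n$ is the smallest positive integer such that every impossibly burnable $n$-path forest has shortest path of order at most $M_n$ (i.e. $M_n$ is the maximum of $l_1$ over all impossibly burnable $n$-path forests). *)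

theory Defs
  imports Complex_Main
begin

definition B :: "nat \<Rightarrow> nat \<Rightarrow> nat" where
  "B m l = (LEAST t::nat. 0 < t \<and> t mod 2 = l mod 2 \<and>
              int l \<le> 2 * int m * int t - (int t)^2)"

text \<open>An n-path forest is a list of path orders (each \<ge> 1), sorted ascending;
  it is impossibly burnable (w.r.t. total order m^2, m > 0) if the sum of B_m exceeds m.\<close>
definition path_forest :: "nat \<Rightarrow> nat list \<Rightarrow> bool" where
  "path_forest n ls \<longleftrightarrow> length ls = n \<and> sorted ls \<and> (\<forall>l\<in>set ls. 1 \<le> l)"

definition impossibly_burnable :: "nat \<Rightarrow> nat list \<Rightarrow> bool" where
  "impossibly_burnable m ls \<longleftrightarrow> 0 < m \<and> sum_list ls = m^2 \<and>
      sum_list (map (B m) ls) > m"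

definition M :: "nat \<Rightarrow> nat" where
  "M n = (LEAST b::nat. 0 < b \<and>
      (\<forall>m ls. path_forest n ls \<and> impossibly_burnable m ls \<longrightarrow> hd ls \<le> b))"

end

theory Submission
  imports Defs
begin


lemma witness2:
  fixes n lam eps :: int
  assumes "lam + eps \<le> 9*n - 10"
  shows "\<exists>p\<ge>1. p*(lam+eps) \<le> (12*n-6-3*p)*p - (6*n-4)"
  by (rule exI[of _ 2]) (use assms in auto)

lemma j2_case:
  fixes n m lam par :: int
  assumes n3: "3 \<le> n" and l2: "2 \<le> lam" and lm: "lam \<le> 2*m" and par: "par = 0 \<or> par = 1"
  and cs: "m+2-2*n+par \<le> 0 \<or> (m+2-2*n+par \<le> n-1)
     \<or> (n-1)*lam + 2 \<le> ((n-1)*2 - par)^2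
     \<or> (n-1 \<le> m+2-2*n+par \<and> lam + (n-2)*(2*m-1) + 2*(n-1) \<le> ((n-1)*3 - 1 - par)^2)"
  shows "lam + 1 \<le> 9*n - 10"
  using cs
proof (elim disjE)
  assume "m+2-2*n+par \<le> 0" then show ?thesis using lm par n3 by linarith
next
  assume "m+2-2*n+par \<le> n-1" then show ?thesis using lm par n3 by linarith
next
  assume h: "(n-1)*lam + 2 \<le> ((n-1)*2 - par)^2"
  have a: "0 \<le> (n-1)*2 - par" using par n3 by (auto simp: algebra_simps)
  have "((n-1)*2 - par)^2 \<le> ((n-1)*2)^2"
    using a par by (intro power_mono) auto
  hence "(n-1)*lam < (n-1)*(4*n-4)" using h by (simp add: power2_eq_square algebra_simps)
  hence "lam < 4*n-4" using n3 by (simp add: mult_less_cancel_left)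
  then show ?thesis using n3 by linarith
next
  assume h: "n-1 \<le> m+2-2*n+par \<and> lam + (n-2)*(2*m-1) + 2*(n-1) \<le> ((n-1)*3 - 1 - par)^2"
  have a: "0 \<le> (n-1)*3 - 1 - par" using par n3 by (auto simp: algebra_simps)
  have b: "((n-1)*3 - 1 - par)^2 \<le> ((n-1)*3 - 1)^2"
    using a par by (intro power_mono) auto
  have c: "(n-2)*(lam-1) \<le> (n-2)*(2*m-1)" using n3 lm by (intro mult_left_mono) auto
  have "(n-1)*lam + n \<le> ((n-1)*3-1)^2" using h b c by (simp add: algebra_simps)
  hence "(n-1)*lam < (n-1)*(9*n-15)" using n3 by (simp add: power2_eq_square algebra_simps)
  hence "lam < 9*n-15" using n3 by (simp add: mult_less_cancel_left)
  then show ?thesis using n3 by linarith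
qed

lemma j3_case:
  fixes n m lam par :: int
  assumes n3: "3 \<le> n" and l1: "2*m+1 \<le> lam" and l2: "lam \<le> 4*m-3" and nl: "n*lam \<le> m^2"
    and par: "par = 0 \<or> par = 1"
  and cs: "m+2-3*n+par \<le> 0 \<or> (1 \<le> m+2-3*n+par \<and> m+2-3*n+par \<le> n-1 \<and> (m+2-3*n+par)*(4*m-2-lam) \<le> m^2 - n*lam)
     \<or> (n-1)*lam + 2 \<le> ((n-1)*3 - par)^2
     \<or> (n-1 \<le> m+2-3*n+par \<and> lam + (n-2)*(4*m-4) + 2*(n-1) \<le> ((n-1)*4 - 1 - par)^2)"
  shows "\<exists>p\<ge>1. p*(lam+par) \<le> (12*n-6-3*p)*p - (6*n-4)"
  using cs
proof (elim disjE)
  assume h: "m+2-3*n+par \<le> 0"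
  have m0: "0 \<le> m" using l1 l2 by linarith
  have "m \<le> 3*n-2" using h par by linarith
  hence "m^2 \<le> (3*n-2)^2" using m0 by (intro power_mono) auto
  hence "n*lam < n*(9*n-10)" using nl n3 by (simp add: power2_eq_square algebra_simps)
  hence "lam < 9*n-10" using n3 by (simp add: mult_less_cancel_left)
  hence "lam + par \<le> 9*n-10" using par by auto
  then show ?thesis by (rule witness2)
next
  assume h: "1 \<le> m+2-3*n+par \<and> m+2-3*n+par \<le> n-1 \<and> (m+2-3*n+par)*(4*m-2-lam) \<le> m^2 - n*lam"
  define p where "p = 4*n-m-2-par"
  have p1: "1 \<le> p" using h unfolding p_def by linarith
  have hm: "m = 4*n-2-p-par" unfolding p_def by simp
  have e1: "(m+2-3*n+par)*(4*m-2-lam) = (n-p)*(4*m-2) - n*lam + p*lam" unfolding p_def by algebra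
  have A: "p*lam \<le> m^2 - (n-p)*(4*m-2)" using h e1 by linarith
  have "p*(lam+par) \<le> (12*n-6-3*p)*p - (6*n-4)"
    using par
  proof
    assume "par = 0"
    hence "m^2 - (n-p)*(4*m-2) = (12*n-6-3*p)*p - (6*n-4)" using hm by algebra
    then show ?thesis using A \<open>par = 0\<close> by simp
  next
    assume "par = 1"
    hence "m^2 - (n-p)*(4*m-2) = (12*n-6-3*p)*p - (6*n-4) - (2*p+4*n-5)" using hm by algebra
    then show ?thesis using A \<open>par = 1\<close> p1 n3 by (simp add: algebra_simps)
  qed
  then show ?thesis using p1 by blast
next
  assume h: "(n-1)*lam + 2 \<le> ((n-1)*3 - par)^2"
  have "lam + par \<le> 9*n-10" using par
  proof
    assume "par = 0"
    hence "(n-1)*lam < (n-1)*(9*n-9)" using h by (simp add: power2_eq_square algebra_simps)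
    hence "lam < 9*n-9" using n3 by (simp add: mult_less_cancel_left)
    then show ?thesis using \<open>par = 0\<close> by simp
  next
    assume "par = 1"
    hence "(n-1)*lam < (n-1)*(9*n-15)" using h by (simp add: power2_eq_square algebra_simps)
    hence "lam < 9*n-15" using n3 by (simp add: mult_less_cancel_left)
    then show ?thesis using \<open>par = 1\<close> n3 by simp
  qed
  then show ?thesis by (rule witness2)
next
  assume h: "n-1 \<le> m+2-3*n+par \<and> lam + (n-2)*(4*m-4) + 2*(n-1) \<le> ((n-1)*4 - 1 - par)^2"
  have False using par
  proof
    assume "par = 0"
    hence mm: "4*n-3 \<le> m" using h by linarith
    have "(n-2)*(16*n-16) \<le> (n-2)*(4*m-4)" using mm n3 by (intro mult_left_mono) auto
    then show False using h \<open>par = 0\<close> l1 mm n3 by (simp add: power2_eq_square algebra_simps)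
  next
    assume "par = 1"
    hence mm: "4*n-4 \<le> m" using h by linarith
    have "(n-2)*(16*n-20) \<le> (n-2)*(4*m-4)" using mm n3 by (intro mult_left_mono) auto
    then show False using h \<open>par = 1\<close> l1 mm n3 by (simp add: power2_eq_square algebra_simps)
  qed
  then show ?thesis ..
qed

lemma j4_case:
  fixes n m lam par t :: int
  assumes n3: "3 \<le> n" and t2: "2 \<le> t" and tm: "t \<le> m - 3" and nl: "n*lam \<le> m^2"
    and lmu: "m^2 + 2 - (m-t)^2 \<le> lam" and par: "par = 0 \<or> par = 1"
  and cs: "m+2-n*(t+2)+par \<le> 0
     \<or> (1 \<le> m+2-n*(t+2)+par \<and> m+2-n*(t+2)+par \<le> n-1 \<and>
         (n-(m+2-n*(t+2)+par))*lam + (m+2-n*(t+2)+par)*(m^2+2-(m-1-t)^2) \<le> m^2)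
     \<or> (n-1)*lam + 2 \<le> ((n-1)*(t+2) - par)^2
     \<or> (n-1 \<le> m+2-n*(t+2)+par \<and> lam + (n-2)*(m^2-(m-1-t)^2) + 2*(n-1) \<le> ((n-1)*(t+3) - 1 - par)^2)"
  shows False
proof -
  have nmu: "n*(m^2 + 2 - (m-t)^2) \<le> m^2"
    using nl lmu n3 by (smt (verit) mult_left_mono)
  have pre: "(2*n-1)*t \<le> m"
  proof (rule ccontr)
    assume "\<not> (2*n-1)*t \<le> m"
    hence a: "0 < (n-1)*t - (m - n*t)" by (simp add: algebra_simps)
    have b: "0 < (n-1)*t + (m - n*t)" using tm by (simp add: algebra_simps)
    have pp: "0 < ((n-1)*t - (m - n*t)) * ((n-1)*t + (m-n*t))" by (rule mult_pos_pos[OF a b])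
    have q: "0 \<le> (n-1)*t^2" using n3 by simp
    have idt: "m^2 - n*(m^2 + 2 - (m-t)^2) = - ((n-1)*t^2) - 2*n - ((n-1)*t - (m - n*t)) * ((n-1)*t + (m-n*t))"
      by algebra
    show False using idt pp q nmu n3 by linarith
  qed
  have n1: "0 < n - 1" using n3 by simp
  show False using cs
  proof (elim disjE)
    assume h: "m+2-n*(t+2)+par \<le> 0"
    have "(2*n-1)*t \<le> n*(t+2) - 2" using h pre par by linarith
    hence "(n-1)*(t-2) \<le> 0" by (simp add: algebra_simps)
    hence "t \<le> 2" using n1 by (simp add: mult_le_0_iff)
    hence tt: "t = 2" using t2 by simp
    hence mm: "m = 4*n-2" using pre h par by (simp add: algebra_simps)
    have "n*((4*n-2)^2 + 2 - (4*n-2-2)^2) \<le> (4*n-2)^2" using nmu tt mm by simp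
    then show False using n3 by (simp add: power2_eq_square algebra_simps)
  next
    assume h: "1 \<le> m+2-n*(t+2)+par \<and> m+2-n*(t+2)+par \<le> n-1 \<and>
         (n-(m+2-n*(t+2)+par))*lam + (m+2-n*(t+2)+par)*(m^2+2-(m-1-t)^2) \<le> m^2"
    define R where "R = m+2-n*(t+2)+par"
    have R1: "1 \<le> R" and Rn: "R \<le> n-1" using h R_def by auto
    have hh: "(n-R)*lam + R*(m^2+2-(m-1-t)^2) \<le> m^2" using h R_def by auto
    have "(2*n-1)*t \<le> n*(t+3) - 3" using Rn pre par R_def by (auto simp: algebra_simps)
    hence "(n-1)*(t-3) \<le> 0" by (simp add: algebra_simps)
    hence t3: "t \<le> 3" using n1 by (simp add: mult_le_0_iff)
    have A: "(n-R)*(m^2 + 2 - (m-t)^2) \<le> (n-R)*lam" using lmu Rn by (intro mult_left_mono) auto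
    have B: "n*(m^2 + 2 - (m-t)^2) + R*((m^2+2-(m-1-t)^2) - (m^2 + 2 - (m-t)^2)) \<le> m^2"
      using A hh by (simp add: algebra_simps)
    show False
    proof (cases "t = 2")
      case True
      define a where "a = m - 4*n"
      have am: "m = 4*n + a" unfolding a_def by simp
      have a2: "-2 \<le> a" using pre True a_def by simp
      have Ra: "a + 2 \<le> R" using R_def True a_def par by auto
      have m5: "0 \<le> 2*m-5" using pre True n3 by simp
      have c1: "(a+2)*(2*m-5) \<le> R*(2*m-5)" using Ra m5 by (intro mult_right_mono) auto
      have c2: "-2*(m-5) \<le> a*(m-5)" using a2 pre True n3 by (intro mult_right_mono) auto
      have B2: "n*(4*m-2) + R*(2*m-5) \<le> m^2" using B True by (simp add: power2_eq_square algebra_simps)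
      have idt: "m^2 = 4*n*m + m*a" using am by algebra
      have idt2: "(a+2)*(2*m-5) = 2*(m*a) - 5*a + 4*m - 10" by algebra
      have idt3: "a*(m-5) = m*a - 5*a" by algebra
      show False using B2 c1 c2 idt idt2 idt3 pre True n3 by (simp add: algebra_simps)
    next
      case False
      hence tt: "t = 3" using t2 t3 by simp
      hence mm: "m = 6*n-3" using pre R1 Rn R_def par by auto
      have c1: "1*(2*m-7) \<le> R*(2*m-7)" using R1 mm n3 by (intro mult_right_mono) auto
      show False using B c1 tt mm n3 by (simp add: power2_eq_square algebra_simps)
    qed
  next
    assume h: "(n-1)*lam + 2 \<le> ((n-1)*(t+2) - par)^2"
    have l2: "(4*n-3)*t^2 + 2 \<le> lam"
    proof -
      have "(2*n-1)*t*t \<le> m*t" using pre t2 by (intro mult_right_mono) auto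
      then show ?thesis using lmu by (simp add: power2_eq_square algebra_simps)
    qed
    have A: "(n-1)*((4*n-3)*t^2 + 2) \<le> (n-1)*lam" using l2 n1 by (intro mult_left_mono) auto
    have c0: "0 \<le> (n-1)*(t+2) - par" using n1 t2 par by (smt (verit) mult_pos_pos)
    have c1: "(n-1)*(t+2) - par \<le> (n-1)*(2*t)"
    proof -
      have "(n-1)*(t+2) \<le> (n-1)*(2*t)" using t2 n1 by (intro mult_left_mono) auto
      then show ?thesis using par by auto
    qed
    have C: "((n-1)*(t+2) - par)^2 \<le> ((n-1)*(2*t))^2" using c0 c1 by (intro power_mono) auto
    have idt: "((n-1)*(2*t))^2 - (n-1)*((4*n-3)*t^2 + 2) - 2 = - ((n-1)*t^2) - 2*n" by algebra
    have q: "0 \<le> (n-1)*t^2" using n1 by simp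
    show False using h A C idt q n3 by linarith
  next
    assume h: "n-1 \<le> m+2-n*(t+2)+par \<and> lam + (n-2)*(m^2-(m-1-t)^2) + 2*(n-1) \<le> ((n-1)*(t+3) - 1 - par)^2"
    define d where "d = m - (n*(t+3) - 4)"
    have d0: "0 \<le> d" using h par d_def by (auto simp: algebra_simps)
    have "1*5 \<le> (n-1)*(t+3)" using n1 t2 by (intro mult_mono) auto
    hence c0: "0 \<le> (n-1)*(t+3) - 1 - par" using par by auto
    have C: "((n-1)*(t+3) - 1 - par)^2 \<le> ((n-1)*(t+3) - 1)^2" using c0 par by (intro power_mono) auto
    define E where "E = (m^2 + 2 - (m-t)^2) + (n-2)*(m^2-(m-1-t)^2) + 2*n-2-((n-1)*(t+3)-1)^2"
    have idt: "E = d*(2*t+2*(n-2)*(t+1)) + ((n-1)*(n*(t-2)^2 + (6*n-4)*(t-2) + 5*n-6) + 4)"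
      unfolding E_def d_def by algebra
    have p1: "0 \<le> d*(2*t+2*(n-2)*(t+1))" using d0 t2 n3 by (intro mult_nonneg_nonneg) auto
    have p2: "0 \<le> n*(t-2)^2" using n3 by simp
    have p3: "0 \<le> (6*n-4)*(t-2)" using n3 t2 by simp
    have p5: "0 < n*(t-2)^2 + (6*n-4)*(t-2) + 5*n-6" using p2 p3 n3 by linarith
    have p4: "0 < (n-1)*(n*(t-2)^2 + (6*n-4)*(t-2) + 5*n-6)" using p5 n1 by (intro mult_pos_pos) auto
    have "0 < E" using idt p1 p4 by linarith
    have gen: "\<And>(E::int) (X::int) (Y::int) (W::int) (W'::int) (lam::int). 0 < E \<Longrightarrow> lam + X + 2*(n-1) \<le> W' \<Longrightarrow> W' \<le> W \<Longrightarrow> Y \<le> lam \<Longrightarrow> E = Y + X + 2*n-2-W \<Longrightarrow> False"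
      by arith
    show False by (rule gen[OF \<open>0 < E\<close> h[THEN conjunct2] C lmu E_def])
  qed
qed

lemma core:
  fixes n m lam j par R dl H Phi :: int
  assumes n3: "3 \<le> n" and m1: "1 \<le> m" and lam1: "1 \<le> lam" and nl: "n*lam \<le> m^2"
    and j1: "1 \<le> j" and jm: "j \<le> m - 1"
    and muj: "m^2 + 2 - (m+2-j)^2 \<le> lam" and muj1: "lam < m^2 + 2 - (m+1-j)^2"
    and par: "par = (if lam mod 2 = j mod 2 then 0 else 1)"
    and R_def: "R = m+2-n*j+par" and dl_def: "dl = m^2 + 2 - (m+1-j)^2 - lam"
    and H_def: "H = 2*(m+1-j)" and Phi_def: "Phi = m^2 - n*lam"
    and cs: "R \<le> 0 \<or> (1 \<le> R \<and> R \<le> n-1 \<and> R*dl \<le> Phi) \<or> (1 \<le> R \<and> dl + (R-1)*(H-R+1) \<le> Phi)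
             \<or> (n-1 \<le> R \<and> (n-1)*dl + (R-n+1)*(H-R+n-1) \<le> Phi)"
  shows "\<exists>p\<ge>1. p*(lam + (if even lam then 1 else 0)) \<le> (12*n-6-3*p)*p - (6*n-4)"
proof -
  have par01: "par = 0 \<or> par = 1" using par by auto
  have I': "dl + (R-1)*(H-R+1) \<le> Phi \<Longrightarrow> (n-1)*lam + 2 \<le> ((n-1)*j - par)^2"
  proof -
    assume a: "dl + (R-1)*(H-R+1) \<le> Phi"
    have "dl + (R-1)*(H-R+1) - Phi = (n-1)*lam + 2 - ((n-1)*j - par)^2"
      unfolding R_def dl_def H_def Phi_def by algebra
    then show ?thesis using a by linarith
  qed
  have II': "(n-1)*dl + (R-n+1)*(H-R+n-1) \<le> Phi \<Longrightarrow>
      lam + (n-2)*(m^2-(m+1-j)^2) + 2*(n-1) \<le> ((n-1)*(j+1)-1-par)^2"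
  proof -
    assume a: "(n-1)*dl + (R-n+1)*(H-R+n-1) \<le> Phi"
    have "(n-1)*dl + (R-n+1)*(H-R+n-1) - Phi = lam + (n-2)*(m^2-(m+1-j)^2) + 2*(n-1) - ((n-1)*(j+1)-1-par)^2"
      unfolding R_def dl_def H_def Phi_def by algebra
    then show ?thesis using a by linarith
  qed
  have III': "R*dl \<le> Phi \<Longrightarrow> (n-R)*lam + R*(m^2+2-(m+1-j)^2) \<le> m^2"
  proof -
    assume a: "R*dl \<le> Phi"
    have "R*dl - Phi = (n-R)*lam + R*(m^2+2-(m+1-j)^2) - m^2"
      unfolding dl_def Phi_def by algebra
    then show ?thesis using a by linarith
  qed
  have cs2: "R \<le> 0 \<or> (1 \<le> R \<and> R \<le> n-1 \<and> (n-R)*lam + R*(m^2+2-(m+1-j)^2) \<le> m^2)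
      \<or> (n-1)*lam + 2 \<le> ((n-1)*j - par)^2
      \<or> (n-1 \<le> R \<and> lam + (n-2)*(m^2-(m+1-j)^2) + 2*(n-1) \<le> ((n-1)*(j+1)-1-par)^2)"
    using cs I' II' III' by blast
  define eps :: int where "eps = (if even lam then 1 else 0)"
  have eps01: "0 \<le> eps \<and> eps \<le> 1" unfolding eps_def by auto
  consider "j = 1" | "j = 2" | "j = 3" | "4 \<le> j" using j1 by linarith
  then show ?thesis
  proof cases
    case 1
    hence "lam = 1" using muj1 lam1 by (simp add: power2_eq_square algebra_simps)
    hence "lam + eps \<le> 9*n-10" unfolding eps_def using n3 by simp
    then show ?thesis unfolding eps_def by (rule witness2)
  next
    case 2
    have l2: "2 \<le> lam" using muj 2 by (simp add: power2_eq_square algebra_simps)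
    have lm: "lam \<le> 2*m" using muj1 2 by (simp add: power2_eq_square algebra_simps)
    have e: "m^2-(m+1-j)^2 = 2*m-1" using 2 by (simp add: power2_eq_square algebra_simps)
    have "lam + 1 \<le> 9*n - 10"
    proof (rule j2_case[OF n3 l2 lm par01])
      show "m+2-2*n+par \<le> 0 \<or> (m+2-2*n+par \<le> n-1)
        \<or> (n-1)*lam + 2 \<le> ((n-1)*2 - par)^2
        \<or> (n-1 \<le> m+2-2*n+par \<and> lam + (n-2)*(2*m-1) + 2*(n-1) \<le> ((n-1)*3 - 1 - par)^2)"
        using cs2 unfolding R_def e using 2 by (auto simp: algebra_simps)
    qed
    hence "lam + eps \<le> 9*n-10" using eps01 by linarith
    then show ?thesis unfolding eps_def by (rule witness2)
  next
    case 3
    have l1: "2*m+1 \<le> lam" using muj 3 by (simp add: power2_eq_square algebra_simps)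
    have l2: "lam \<le> 4*m-3" using muj1 3 by (simp add: power2_eq_square algebra_simps)
    have e1: "m^2-(m+1-j)^2 = 4*m-4" using 3 by (simp add: power2_eq_square algebra_simps)
    have e2: "m^2+2-(m+1-j)^2 = 4*m-2" using 3 by (simp add: power2_eq_square algebra_simps)
    have pe: "par = eps" unfolding par eps_def using 3 by presburger
    have e3: "(n-R)*lam + R*(4*m-2) \<le> m^2 \<longleftrightarrow> R*(4*m-2-lam) \<le> m^2 - n*lam"
      by (simp add: algebra_simps)
    have "\<exists>p\<ge>1. p*(lam+par) \<le> (12*n-6-3*p)*p - (6*n-4)"
    proof (rule j3_case[OF n3 l1 l2 nl par01])
      show "m+2-3*n+par \<le> 0 \<or> (1 \<le> m+2-3*n+par \<and> m+2-3*n+par \<le> n-1 \<and> (m+2-3*n+par)*(4*m-2-lam) \<le> m^2 - n*lam)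
     \<or> (n-1)*lam + 2 \<le> ((n-1)*3 - par)^2
     \<or> (n-1 \<le> m+2-3*n+par \<and> lam + (n-2)*(4*m-4) + 2*(n-1) \<le> ((n-1)*4 - 1 - par)^2)"
        using cs2 unfolding e1 e2 e3 using 3 R_def by (auto simp: algebra_simps)
    qed
    then show ?thesis unfolding pe eps_def .
  next
    case 4
    define t where "t = j - 2"
    have jt: "j = t + 2" unfolding t_def by simp
    have False
    proof (rule j4_case[OF n3 _ _ nl _ par01])
      show "2 \<le> t" using 4 t_def by simp
      show "t \<le> m - 3" using jm t_def by simp
      show "m^2 + 2 - (m-t)^2 \<le> lam" using muj jt by (simp add: algebra_simps)
      have a1: "m+1-j = m-1-t" using jt by simp
      have a2: "m+2-n*j+par = m+2-n*(t+2)+par" using jt by simp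
      have a3: "(n-1)*j = (n-1)*(t+2)" using jt by simp
      have a4: "(n-1)*(j+1) = (n-1)*(t+3)" using jt by (simp add: algebra_simps)
      show "m+2-n*(t+2)+par \<le> 0
     \<or> (1 \<le> m+2-n*(t+2)+par \<and> m+2-n*(t+2)+par \<le> n-1 \<and>
         (n-(m+2-n*(t+2)+par))*lam + (m+2-n*(t+2)+par)*(m^2+2-(m-1-t)^2) \<le> m^2)
     \<or> (n-1)*lam + 2 \<le> ((n-1)*(t+2) - par)^2
     \<or> (n-1 \<le> m+2-n*(t+2)+par \<and> lam + (n-2)*(m^2-(m-1-t)^2) + 2*(n-1) \<le> ((n-1)*(t+3) - 1 - par)^2)"
        using cs2 unfolding R_def a1 a2 a3 a4 .
    qed
    then show ?thesis ..
  qed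
qed



lemma pe: "(a::nat) mod 2 = b mod 2 \<longleftrightarrow> (even a \<longleftrightarrow> even b)"
  by (metis odd_iff_mod_2_eq_one even_iff_mod_2_eq_zero)

lemma B_wit:
  assumes m0: "0 < m" and l1: "1 \<le> l" and lm: "l \<le> m^2"
  shows "\<exists>t. t \<le> m \<and> 0 < t \<and> t mod 2 = l mod 2 \<and> int l \<le> 2 * int m * int t - (int t)^2"
proof (cases "l mod 2 = m mod 2")
  case True
  have "int l \<le> int (m^2)" using lm by simp
  hence "int l \<le> 2 * int m * int m - (int m)^2" by (simp add: power2_eq_square)
  then show ?thesis using True m0 by auto
next
  case False
  have m2: "2 \<le> m"
  proof (rule ccontr)
    assume "\<not> 2 \<le> m" hence "m = 1" using m0 by simp
    hence "l = 1" using l1 lm by simp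
    then show False using False \<open>m = 1\<close> by simp
  qed
  have lne: "l \<noteq> m^2"
  proof
    assume "l = m^2"
    hence "even l = even m" by simp
    then show False using False unfolding pe by simp
  qed
  hence "l + 1 \<le> m^2" using lm by simp
  hence a: "int l + 1 \<le> int m ^2" by (metis of_nat_1 of_nat_add of_nat_le_iff of_nat_power)
  have b: "2 * int m * int (m-1) - (int (m-1))^2 = int m^2 - 1" using m2 by (simp add: of_nat_diff power2_eq_square algebra_simps)
  have c: "(m-1) mod 2 = l mod 2" using False m2 unfolding pe by (cases m) auto
  show ?thesis using a b c m2 \<open>l + 1 \<le> m^2\<close> by (intro exI[of _ "m-1"]) auto
qed

lemma B_props:
  assumes "0 < m" "1 \<le> l" "l \<le> m^2"
  shows "0 < B m l" "B m l mod 2 = l mod 2" "int l \<le> 2 * int m * int (B m l) - (int (B m l))^2" "B m l \<le> m"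
proof -
  obtain t where t: "t \<le> m" "0 < t \<and> t mod 2 = l mod 2 \<and> int l \<le> 2 * int m * int t - (int t)^2"
    using B_wit[OF assms] by blast
  have P: "0 < B m l \<and> B m l mod 2 = l mod 2 \<and> int l \<le> 2 * int m * int (B m l) - (int (B m l))^2"
    unfolding B_def by (rule LeastI[of _ t]) (use t in auto)
  then show "0 < B m l" "B m l mod 2 = l mod 2" "int l \<le> 2 * int m * int (B m l) - (int (B m l))^2" by auto
  have "B m l \<le> t" unfolding B_def by (rule Least_le) (use t in auto)
  then show "B m l \<le> m" using t by simp
qed

lemma B_min:
  assumes "t < B m l" "0 < t" "t mod 2 = l mod 2"
  shows "2 * int m * int t - (int t)^2 < int l"
proof -
  have "\<not> (0 < t \<and> t mod 2 = l mod 2 \<and> int l \<le> 2 * int m * int t - (int t)^2)"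
    using assms(1) unfolding B_def by (rule not_less_Least)
  then show ?thesis using assms by auto
qed

lemma B_mu:
  assumes m0: "0 < m" and l1: "1 \<le> l" and lm: "l \<le> m^2"
  shows "int m^2 + 2 - (int m + 2 - int (B m l))^2 \<le> int l"
proof -
  define s where "s = B m l"
  have s0: "0 < s" and sp: "s mod 2 = l mod 2" using B_props[OF assms] s_def by auto
  consider "s = 1" | "s = 2" | "3 \<le> s" using s0 by linarith
  then show ?thesis
  proof cases
    case 1
    then show ?thesis using m0 l1 s_def by (simp add: power2_eq_square algebra_simps)
  next
    case 2
    hence "l mod 2 = 0" using sp by simp
    hence "2 \<le> l" using l1 by (cases "l = 1") auto
    then show ?thesis using 2 s_def by (simp add: power2_eq_square algebra_simps)
  next
    case 3
    define t where "t = s - 2"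
    have st: "s = t + 2" using 3 t_def by simp
    have "t mod 2 = s mod 2" unfolding st by simp
    hence tl: "t < B m l" "0 < t" "t mod 2 = l mod 2" using 3 sp s_def t_def by auto
    have lt: "2 * int m * int t - (int t)^2 < int l" by (rule B_min[OF tl])
    have ev: "even (int l - (2 * int m * int t - (int t)^2))"
    proof -
      have "even l = even t" using tl(3) unfolding pe by simp
      then show ?thesis by simp
    qed
    then obtain k where k: "int l - (2 * int m * int t - (int t)^2) = 2*k" by (rule evenE)
    have "0 < k" using lt k by linarith
    hence "2 * int m * int t - (int t)^2 + 2 \<le> int l" using k by linarith
    moreover have "int s = int t + 2" using t_def 3 by simp
    ultimately show ?thesis using s_def by (simp add: power2_eq_square algebra_simps)
  qed
qed

lemma inv_step:
  fixes H X Sq x :: int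
  assumes inv: "\<forall>X0. 0 \<le> X0 \<and> X0 \<le> X \<longrightarrow> H*X0 - X0^2 \<le> H*X - Sq"
    and X0: "0 \<le> X" and x0: "0 \<le> x" and xH: "2*x \<le> H"
  shows "\<forall>X0. 0 \<le> X0 \<and> X0 \<le> X + x \<longrightarrow> H*X0 - X0^2 \<le> H*(X+x) - (Sq + x^2)"
proof (intro allI impI)
  fix X0 assume h: "0 \<le> X0 \<and> X0 \<le> X + x"
  have hx: "0 \<le> x*(H - x)" using x0 xH by (intro mult_nonneg_nonneg) auto
  show "H*X0 - X0^2 \<le> H*(X+x) - (Sq + x^2)"
  proof (cases "X0 \<le> X")
    case True
    hence "H*X0 - X0^2 \<le> H*X - Sq" using inv h by auto
    then show ?thesis using hx by (simp add: algebra_simps power2_eq_square)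
  next
    case False
    define y where "y = X0 - X"
    have y0: "0 < y" "y \<le> x" using False h y_def by auto
    have a: "H*X - X^2 \<le> H*X - Sq" using inv X0 by auto
    have b: "0 \<le> (x - y)*(H - x - y)" using y0 xH by (intro mult_nonneg_nonneg) auto
    have c: "0 \<le> X*y" using X0 y0 by simp
    have "H*X0 - X0^2 = (H*X - X^2) + (H*y - y^2) - 2*(X*y)" unfolding y_def by algebra
    moreover have "(H*x - x^2) - (H*y - y^2) = (x - y)*(H - x - y)" by algebra
    ultimately show ?thesis using a b c by (simp add: algebra_simps power2_eq_square)
  qed
qed

lemma list_main:
  fixes lam j dl H :: int
  assumes m0: "0 < m"
    and dl_def: "dl = int m^2 + 2 - (int m + 1 - j)^2 - lam" and H_def: "H = 2*(int m + 1 - j)"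
  shows "(\<forall>l\<in>set xs. 1 \<le> l \<and> l \<le> m^2 \<and> lam \<le> int l) \<Longrightarrow>
    \<exists>e X Sq. 0 \<le> e \<and> e \<le> int (length xs) \<and> 0 \<le> X \<and> (e = 0 \<longrightarrow> X = 0) \<and>
      sum_list (map (\<lambda>l. int (B m l)) xs) \<le> int (length xs) * j + e + X \<and>
      int (length xs) * lam + e*dl + H*X - Sq \<le> sum_list (map int xs) \<and>
      (\<forall>X0. 0 \<le> X0 \<and> X0 \<le> X \<longrightarrow> H*X0 - X0^2 \<le> H*X - Sq)"
proof (induction xs)
  case Nil
  show ?case by (intro exI[of _ 0]) auto
next
  case (Cons l xs)
  then obtain e X Sq where IH: "0 \<le> e" "e \<le> int (length xs)" "0 \<le> X" "e = 0 \<longrightarrow> X = 0"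
      "sum_list (map (\<lambda>l. int (B m l)) xs) \<le> int (length xs) * j + e + X"
      "int (length xs) * lam + e*dl + H*X - Sq \<le> sum_list (map int xs)"
      "\<forall>X0. 0 \<le> X0 \<and> X0 \<le> X \<longrightarrow> H*X0 - X0^2 \<le> H*X - Sq" by auto
  have l: "1 \<le> l" "l \<le> m^2" "lam \<le> int l" using Cons.prems by auto
  define s where "s = int (B m l)"
  have sm: "s \<le> int m" using B_props(4)[OF m0 l(1) l(2)] s_def by simp
  have smu: "int m^2 + 2 - (int m + 2 - s)^2 \<le> int l" using B_mu[OF m0 l(1) l(2)] s_def by simp
  show ?case
  proof (cases "s \<le> j")
    case True
    show ?thesis
      by (rule exI[of _ e], rule exI[of _ X], rule exI[of _ Sq]) (use IH True l s_def in \<open>auto simp: algebra_simps\<close>)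
  next
    case False
    define x where "x = s - j - 1"
    have x0: "0 \<le> x" and xH: "2*x \<le> H" using False sm x_def H_def by auto
    have idt: "int m^2 + 2 - (int m + 2 - s)^2 = lam + dl + H*x - x^2"
      unfolding dl_def H_def x_def by algebra
    have inv': "\<forall>X0. 0 \<le> X0 \<and> X0 \<le> X + x \<longrightarrow> H*X0 - X0^2 \<le> H*(X+x) - (Sq + x^2)"
      by (rule inv_step[OF IH(7) IH(3) x0 xH])
    show ?thesis
    proof (rule exI[of _ "e+1"], rule exI[of _ "X+x"], rule exI[of _ "Sq + x^2"], intro conjI)
      show "sum_list (map (\<lambda>l. int (B m l)) (l # xs)) \<le> int (length (l # xs)) * j + (e + 1) + (X + x)"
        using IH(5) s_def x_def by (simp add: algebra_simps)
      show "int (length (l # xs)) * lam + (e + 1) * dl + H * (X + x) - (Sq + x^2) \<le> sum_list (map int (l # xs))"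
        using IH(6) smu idt by (simp add: algebra_simps)
    qed (use IH x0 inv' in auto)
  qed
qed

lemma cases_lemma:
  fixes e X Sq R dl H Phi n :: int
  assumes e0: "0 \<le> e" and en: "e \<le> n - 1" and X0: "0 \<le> X" and eX: "e = 0 \<longrightarrow> X = 0"
    and R: "R \<le> e + X" and Ph: "e*dl + H*X - Sq \<le> Phi" and dl: "1 \<le> dl"
    and inv: "\<forall>X0. 0 \<le> X0 \<and> X0 \<le> X \<longrightarrow> H*X0 - X0^2 \<le> H*X - Sq"
  shows "R \<le> 0 \<or> (1 \<le> R \<and> R \<le> n-1 \<and> R*dl \<le> Phi) \<or> (1 \<le> R \<and> dl + (R-1)*(H-R+1) \<le> Phi)
             \<or> (n-1 \<le> R \<and> (n-1)*dl + (R-n+1)*(H-R+n-1) \<le> Phi)"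
proof (cases "R \<le> 0")
  case True then show ?thesis by simp
next
  case False
  hence R1: "1 \<le> R" by simp
  have g0: "0 \<le> H*X - Sq" using inv X0 by (auto dest: spec[of _ 0])
  show ?thesis
  proof (cases "R \<le> e")
    case True
    have "R*dl \<le> e*dl" using True dl by (intro mult_right_mono) auto
    then show ?thesis using True en R1 Ph g0 by auto
  next
    case False
    define Y where "Y = R - e"
    have Y: "0 < Y" "Y \<le> X" using False R Y_def by auto
    have e1: "1 \<le> e" using eX Y e0 by auto
    have "H*Y - Y^2 \<le> H*X - Sq" using inv Y by auto
    define Q where "Q = (\<lambda>x. x*dl + (R-x)*(H-R+x))"
    have Qe: "Q e \<le> Phi" using Ph \<open>H*Y - Y^2 \<le> H*X - Sq\<close> unfolding Q_def Y_def by (simp add: algebra_simps power2_eq_square)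
    define b where "b = min (n-1) R"
    have eb: "e \<le> b" using en False b_def by auto
    have conc: "(b-1)*Q e = (b-e)*Q 1 + (e-1)*Q b + (e-1)*(b-e)*(b-1)"
      unfolding Q_def by algebra
    have pos: "0 \<le> (e-1)*(b-e)*(b-1)" using e1 eb by (intro mult_nonneg_nonneg) auto
    have "Q 1 \<le> Phi \<or> Q b \<le> Phi"
    proof (rule ccontr)
      assume "\<not> (Q 1 \<le> Phi \<or> Q b \<le> Phi)"
      hence q1: "Phi + 1 \<le> Q 1" and qb: "Phi + 1 \<le> Q b" by auto
      show False
      proof (cases "b = 1")
        case True
        then show False using eb e1 Qe q1 by auto
      next
        case False
        have b1: "0 < b - 1" using False e1 eb by auto
        have A: "(b-e)*(Phi+1) \<le> (b-e)*Q 1" using q1 eb by (intro mult_left_mono) auto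
        have B: "(e-1)*(Phi+1) \<le> (e-1)*Q b" using qb e1 by (intro mult_left_mono) auto
        have C: "(b-1)*Q e \<le> (b-1)*Phi" using Qe b1 by (intro mult_left_mono) auto
        have "(b-1)*(Phi+1) \<le> (b-1)*Phi" using A B C conc pos by (simp add: algebra_simps)
        then show False using b1 by (simp add: algebra_simps)
      qed
    qed
    then show ?thesis
    proof
      assume "Q 1 \<le> Phi"
      then show ?thesis using R1 unfolding Q_def by auto
    next
      assume qb: "Q b \<le> Phi"
      show ?thesis
      proof (cases "R \<le> n - 1")
        case True
        hence "b = R" using b_def by simp
        then show ?thesis using qb True R1 unfolding Q_def by auto
      next
        case False
        hence "b = n - 1" using b_def by simp
        then show ?thesis using qb False unfolding Q_def by (auto simp: algebra_simps)
      qed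
    qed
  qed
qed

lemma sum_ge: "(\<forall>x\<in>set xs. (a::nat) \<le> x) \<Longrightarrow> length xs * a \<le> sum_list xs"
  by (induction xs) auto

lemma int_sum_list: "int (sum_list (map f xs)) = sum_list (map (\<lambda>x. int (f x)) xs)"
  by (induction xs) auto

lemma int_sum_list2: "int (sum_list xs) = sum_list (map int xs)"
  by (induction xs) auto

lemma sumB_even: "(\<forall>l\<in>set xs. B m l mod 2 = l mod 2) \<Longrightarrow> even (sum_list (map (B m) xs)) = even (sum_list xs)"
  by (induction xs) (auto simp: pe)

lemma upper:
  assumes n3: "3 \<le> n" and pf: "path_forest n ls" and ib: "impossibly_burnable m ls"
  shows "\<exists>p::int\<ge>1. p*(int (hd ls) + (if even (int (hd ls)) then 1 else 0)) \<le> (12*int n-6-3*p)*p - (6*int n-4)"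
proof -
  have len: "length ls = n" and srt: "sorted ls" and pos: "\<forall>l\<in>set ls. 1 \<le> l"
    using pf unfolding path_forest_def by auto
  have m0: "0 < m" and sm: "sum_list ls = m^2" and sB: "m < sum_list (map (B m) ls)"
    using ib unfolding impossibly_burnable_def by auto
  obtain a rest where ls: "ls = a # rest" using len n3 by (cases ls) auto
  have hd: "hd ls = a" using ls by simp
  have lenr: "length rest = n - 1" using len ls by simp
  have ar: "\<forall>l\<in>set rest. a \<le> l" using srt ls by simp
  have all: "\<forall>l\<in>set ls. a \<le> l" using ar ls by simp
  have lem2: "\<forall>l\<in>set ls. l \<le> m^2"
  proof
    fix l assume "l \<in> set ls" thus "l \<le> m^2" using member_le_sum_list[of l ls] sm by simp
  qed
  have a1: "1 \<le> a" using pos ls by simp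
  have na: "n * a \<le> m^2" using sum_ge[OF all] len sm by simp
  define lam where "lam = int a"
  define mi where "mi = int m"
  define ni where "ni = int n"
  have lam1: "1 \<le> lam" using a1 lam_def by simp
  have "int (n * a) \<le> int (m^2)" using na by (simp only: of_nat_le_iff)
  hence nl: "ni*lam \<le> mi^2" unfolding ni_def lam_def mi_def by simp
  have n3i: "3 \<le> ni" using n3 ni_def by simp
  have m2: "2 \<le> mi"
  proof (rule ccontr)
    assume "\<not> 2 \<le> mi" hence "mi = 1" using m0 mi_def by simp
    have "3*1 \<le> ni*lam" using n3i lam1 by (intro mult_mono) auto
    then show False using nl \<open>mi = 1\<close> by simp
  qed
  have lamlt: "lam < mi^2 - 2"
  proof -
    have "3*lam \<le> ni*lam" using n3i lam1 by (intro mult_right_mono) auto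
    moreover have "2*2 \<le> mi*mi" using m2 by (intro mult_mono) auto
    hence "4 \<le> mi^2" by (simp add: power2_eq_square)
    ultimately show ?thesis using nl by linarith
  qed
  define P where "P = (\<lambda>k::nat. lam < mi^2 + 2 - (mi + 2 - int k)^2)"
  have Pm: "P m" unfolding P_def using lamlt mi_def by simp
  define k0 where "k0 = (LEAST k. P k)"
  have Pk0: "P k0" unfolding k0_def by (rule LeastI[of _ m]) (rule Pm)
  have k0m: "k0 \<le> m" unfolding k0_def by (rule Least_le) (rule Pm)
  have nP0: "\<not> P 0" unfolding P_def using lam1 m2 by (simp add: power2_eq_square algebra_simps)
  have nP1: "\<not> P 1" unfolding P_def using lam1 m2 by (simp add: power2_eq_square algebra_simps)
  have k00: "k0 \<noteq> 0" using Pk0 nP0 by (cases "k0 = 0") auto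
  have k01: "k0 \<noteq> 1" using Pk0 nP1 by (cases "k0 = 1") auto
  have k02: "2 \<le> k0" using k00 k01 by linarith
  have nPk: "\<not> P (k0 - 1)" unfolding k0_def by (rule not_less_Least) (use k02 k0_def in auto)
  define j where "j = int k0 - 1"
  have j1: "1 \<le> j" using k02 j_def by simp
  have jm: "j \<le> mi - 1" using k0m j_def mi_def by simp
  have muj: "mi^2 + 2 - (mi+2-j)^2 \<le> lam"
  proof -
    have "int (k0 - 1) = j" using k02 j_def by simp
    then show ?thesis using nPk unfolding P_def by simp
  qed
  have muj1: "lam < mi^2 + 2 - (mi+1-j)^2"
  proof -
    have e: "mi + 2 - int k0 = mi + 1 - j" using j_def by simp
    have "lam < mi^2 + 2 - (mi + 2 - int k0)^2" using Pk0 unfolding P_def .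
    then show ?thesis unfolding e .
  qed
  define par :: int where "par = (if lam mod 2 = j mod 2 then 0 else 1)"
  define dl where "dl = mi^2 + 2 - (mi+1-j)^2 - lam"
  define H where "H = 2*(mi+1-j)"
  define Phi where "Phi = mi^2 - ni*lam"
  define R where "R = mi+2-ni*j+par"
  define s1 where "s1 = int (B m a)"
  have a_m2: "a \<le> m^2" using lem2 ls by simp
  have s1m: "s1 \<le> mi" using B_props(4)[OF m0 a1 a_m2] s1_def mi_def by simp
  have s1mu: "mi^2 + 2 - (mi + 2 - s1)^2 \<le> lam" using B_mu[OF m0 a1 a_m2] s1_def mi_def lam_def by simp
  have s1par: "s1 mod 2 = lam mod 2"
  proof -
    have "B m a mod 2 = a mod 2" by (rule B_props(2)[OF m0 a1 a_m2])
    hence "int (B m a mod 2) = int (a mod 2)" by simp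
    then show ?thesis unfolding s1_def lam_def by (simp add: zmod_int)
  qed
  have s1j: "s1 \<le> j"
  proof (rule ccontr)
    assume "\<not> s1 \<le> j"
    hence c: "mi + 2 - s1 \<le> mi + 1 - j" by simp
    have "(mi + 2 - s1)^2 \<le> (mi + 1 - j)^2" using c s1m by (intro power_mono) auto
    then show False using s1mu muj1 by linarith
  qed
  have s1jp: "s1 \<le> j - par"
  proof (cases "par = 0")
    case True then show ?thesis using s1j by simp
  next
    case False
    hence "lam mod 2 \<noteq> j mod 2" unfolding par_def by auto
    hence "s1 \<noteq> j" using s1par by auto
    then show ?thesis using s1j False unfolding par_def by auto
  qed
  have restp: "\<forall>l\<in>set rest. 1 \<le> l \<and> l \<le> m^2 \<and> lam \<le> int l" using ar pos lem2 ls lam_def by auto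
  obtain e X Sq where L: "0 \<le> e" "e \<le> int (length rest)" "0 \<le> X" "e = 0 \<longrightarrow> X = 0"
      "sum_list (map (\<lambda>l. int (B m l)) rest) \<le> int (length rest) * j + e + X"
      "int (length rest) * lam + e*dl + H*X - Sq \<le> sum_list (map int rest)"
      "\<forall>X0. 0 \<le> X0 \<and> X0 \<le> X \<longrightarrow> H*X0 - X0^2 \<le> H*X - Sq"
    using list_main[OF m0 _ _ restp, of dl j H] dl_def H_def mi_def by auto
  have lr: "int (length rest) = ni - 1" using lenr n3 ni_def by simp
  have sB2: "m + 2 \<le> sum_list (map (B m) ls)"
  proof -
    have "\<forall>l\<in>set ls. B m l mod 2 = l mod 2" using B_props(2)[OF m0] pos lem2 by auto
    hence "even (sum_list (map (B m) ls)) = even (sum_list ls)" by (rule sumB_even)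
    hence "even (sum_list (map (B m) ls)) = even (m^2)" unfolding sm .
    hence "even (sum_list (map (B m) ls)) = even m" by simp
    hence "sum_list (map (B m) ls) \<noteq> m + 1" by auto
    then show ?thesis using sB by linarith
  qed
  have sBi: "mi + 2 \<le> s1 + sum_list (map (\<lambda>l. int (B m l)) rest)"
  proof -
    have "int (sum_list (map (B m) ls)) = s1 + sum_list (map (\<lambda>l. int (B m l)) rest)"
      unfolding ls s1_def by (simp add: int_sum_list)
    then show ?thesis using sB2 mi_def by linarith
  qed
  have Rle: "R \<le> e + X" using sBi L(5) s1jp lr unfolding R_def by (simp add: algebra_simps)
  have smi: "mi^2 = lam + sum_list (map int rest)"
  proof -
    have "int (sum_list ls) = lam + sum_list (map int rest)" unfolding ls lam_def by (simp add: int_sum_list2)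
    then show ?thesis using sm mi_def by simp
  qed
  have Phle: "e*dl + H*X - Sq \<le> Phi" using L(6) smi lr unfolding Phi_def by (simp add: algebra_simps)
  have dl1: "1 \<le> dl" using muj1 dl_def by simp
  have en: "e \<le> ni - 1" using L(2) lr by simp
  have cs: "R \<le> 0 \<or> (1 \<le> R \<and> R \<le> ni-1 \<and> R*dl \<le> Phi) \<or> (1 \<le> R \<and> dl + (R-1)*(H-R+1) \<le> Phi)
             \<or> (ni-1 \<le> R \<and> (ni-1)*dl + (R-ni+1)*(H-R+ni-1) \<le> Phi)"
    by (rule cases_lemma[OF L(1) en L(3) L(4) Rle Phle dl1 L(7)])
  have "\<exists>p\<ge>1. p*(lam + (if even lam then 1 else 0)) \<le> (12*ni-6-3*p)*p - (6*ni-4)"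
    by (rule core[OF n3i _ lam1 nl j1 jm muj muj1 par_def R_def dl_def H_def Phi_def cs]) (use m2 in simp)
  then show ?thesis unfolding hd lam_def ni_def .
qed



lemma bound_iff:
  fixes n k :: int
  assumes n1: "1 \<le> n"
  shows "real_of_int k \<le> 12 * real_of_int n - 2 * sqrt (18 * real_of_int n - 12) - 6 \<longleftrightarrow>
         (0 \<le> 12*n-6-k \<and> 12*(6*n-4) \<le> (12*n-6-k)^2)"
proof -
  define D where "D = 12*n-6-k"
  define y where "y = 18 * real_of_int n - 12"
  have y0: "0 \<le> y" using n1 y_def by simp
  have "real_of_int k \<le> 12 * real_of_int n - 2 * sqrt (18 * real_of_int n - 12) - 6 \<longleftrightarrow> 2 * sqrt y \<le> real_of_int D"
    unfolding D_def y_def by (simp; intro iffI; linarith)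
  also have "\<dots> \<longleftrightarrow> (0 \<le> real_of_int D \<and> 4*y \<le> (real_of_int D)^2)"
  proof
    assume h: "2 * sqrt y \<le> real_of_int D"
    have s0: "0 \<le> 2 * sqrt y" using y0 by simp
    have "(2 * sqrt y)^2 \<le> (real_of_int D)^2" using h s0 by (intro power_mono) auto
    moreover have "(2 * sqrt y)^2 = 4*y" using y0 by (simp add: power_mult_distrib)
    moreover have "0 \<le> real_of_int D" using h s0 by linarith
    ultimately show "0 \<le> real_of_int D \<and> 4*y \<le> (real_of_int D)^2" by simp
  next
    assume h: "0 \<le> real_of_int D \<and> 4*y \<le> (real_of_int D)^2"
    have "sqrt (4*y) \<le> sqrt ((real_of_int D)^2)" using h by (intro real_sqrt_le_mono) auto
    moreover have "sqrt ((real_of_int D)^2) = real_of_int D" using h by simp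
    moreover have "sqrt (4*y) = 2 * sqrt y" by (simp add: real_sqrt_mult)
    ultimately show "2 * sqrt y \<le> real_of_int D" by simp
  qed
  also have "\<dots> \<longleftrightarrow> (0 \<le> D \<and> 12*(6*n-4) \<le> D^2)"
  proof -
    have "4*y = real_of_int (12*(6*n-4))" unfolding y_def by simp
    moreover have "(real_of_int D)^2 = real_of_int (D^2)" by simp
    ultimately show ?thesis by (metis of_int_0_le_iff of_int_le_iff)
  qed
  finally show ?thesis unfolding D_def .
qed

lemma witness_bound:
  fixes n k p :: int
  assumes n1: "1 \<le> n" and p1: "1 \<le> p" and w: "p*k \<le> (12*n-6-3*p)*p - (6*n-4)"
  shows "0 \<le> 12*n-6-k \<and> 12*(6*n-4) \<le> (12*n-6-k)^2"
proof -
  define D where "D = 12*n-6-k"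
  define c where "c = 6*n-4"
  have c0: "0 < c" using n1 c_def by simp
  have pD: "3*p^2 + c \<le> p*D" using w unfolding D_def c_def by (simp add: algebra_simps power2_eq_square)
  have D0: "0 < D"
  proof (rule ccontr)
    assume "\<not> 0 < D" hence "p*D \<le> 0" using p1 by (simp add: mult_nonneg_nonpos)
    moreover have "0 \<le> 3*p^2" by simp
    ultimately show False using pD c0 by linarith
  qed
  have a: "(3*p^2 + c)^2 \<le> (p*D)^2" using pD c0 by (intro power_mono) auto
  have b: "12*c*p^2 \<le> (3*p^2 + c)^2"
  proof -
    have "(3*p^2 + c)^2 - 12*c*p^2 = (3*p^2 - c)^2" by algebra
    moreover have "0 \<le> (3*p^2 - c)^2" by simp
    ultimately show ?thesis by linarith
  qed
  have "p^2 * (12*c) \<le> p^2 * D^2" using a b by (simp add: power_mult_distrib algebra_simps)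
  hence "12*c \<le> D^2" using p1 by (simp add: mult_le_cancel_left)
  then show ?thesis using D0 unfolding D_def c_def by simp
qed

lemma sum_insort: "sum_list (map (f::nat\<Rightarrow>nat) (insort x xs)) = f x + sum_list (map f xs)"
  by (induction xs) auto

lemma B_ge3:
  assumes "0 < m" "odd l" "2*m+1 \<le> l" "l \<le> m^2"
  shows "3 \<le> B m l"
proof -
  have l1: "1 \<le> l" using assms by simp
  have b0: "0 < B m l" and bp: "B m l mod 2 = l mod 2" and bl: "int l \<le> 2 * int m * int (B m l) - (int (B m l))^2"
    using B_props[OF assms(1) l1 assms(4)] by auto
  have "odd (B m l)" using bp assms(2) unfolding pe by simp
  moreover have "B m l \<noteq> 1"
  proof
    assume "B m l = 1" then show False using bl assms(3) by simp
  qed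
  ultimately show ?thesis using b0 by (metis One_nat_def Suc_leI dvd_refl even_Suc le_neq_implies_less numeral_3_eq_3 One_nat_def less_2_cases_iff not_less Suc_1)
qed

lemma B_ge4:
  assumes "0 < m" "even l" "4*m-2 \<le> l" "l \<le> m^2" "1 \<le> l"
  shows "4 \<le> B m l"
proof -
  have b0: "0 < B m l" and bp: "B m l mod 2 = l mod 2" and bl: "int l \<le> 2 * int m * int (B m l) - (int (B m l))^2"
    using B_props[OF assms(1) assms(5) assms(4)] by auto
  have ev: "even (B m l)" using bp assms(2) unfolding pe by simp
  have "B m l \<noteq> 2"
  proof
    assume "B m l = 2"
    hence "int l \<le> 4 * int m - 4" using bl by simp
    moreover have "4 * int m - 2 \<le> int l" using assms(3) assms(1) by linarith
    ultimately show False by simp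
  qed
  moreover have "B m l \<noteq> 1" "B m l \<noteq> 3" using ev by auto
  ultimately show ?thesis using b0 by linarith
qed

lemma sum_insort2: "sum_list (insort (x::nat) xs) = x + sum_list xs"
  by (induction xs) auto

lemma construct_int:
  fixes ni D :: int
  assumes n3: "3 \<le> ni" and Dodd: "odd D" and D0: "0 \<le> D" and D2: "12*(6*ni-4) \<le> D^2"
    and D3: "(D-2)^2 < 12*(6*ni-4)"
  defines "K \<equiv> 12*ni-6-D" and "p \<equiv> (D+1) div 6"
  defines "mi \<equiv> 4*ni-2-p"
  defines "L \<equiv> (12*ni-6-3*p)*p - (6*ni-4) - (p-1)*K"
  defines "q \<equiv> 4*mi-2"
  shows "2 \<le> p \<and> p \<le> ni - 1 \<and> 1 \<le> mi \<and> odd K \<and> odd L \<and> 2*mi+1 \<le> K \<and> K \<le> L \<and> K \<le> q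
     \<and> (p-1)*K + L + (ni-p)*q = mi^2 \<and> 4*ni - p = mi + 2"
proof -
  define c where "c = 6*ni-4"
  define rho where "rho = (D+1) mod 6"
  have Dr: "D + 1 = 6*p + rho" unfolding p_def rho_def by simp
  have r0: "0 \<le> rho" "rho < 6" unfolding rho_def by auto
  have rev: "even rho" using Dr Dodd by (metis even_add even_mult_iff odd_one even_numeral)
  have rcases: "rho = 0 \<or> rho = 2 \<or> rho = 4"
  proof -
    have "rho \<noteq> 1" "rho \<noteq> 3" "rho \<noteq> 5" using rev by auto
    then show ?thesis using r0 by arith
  qed
  have D13: "13 \<le> D"
  proof (rule ccontr)
    assume "\<not> 13 \<le> D" hence "D \<le> 12" by simp
    hence "D^2 \<le> 12^2" using D0 by (intro power_mono) auto
    then show False using D2 n3 by simp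
  qed
  have p2: "2 \<le> p" using Dr r0 D13 by arith
  have D6: "D \<le> 6*ni - 5"
  proof (rule ccontr)
    assume "\<not> D \<le> 6*ni - 5"
    hence "6*ni - 4 \<le> D" by simp
    moreover have "D \<noteq> 6*ni - 4" using Dodd by auto
    ultimately have a: "6*ni-5 \<le> D - 2" by simp
    have "(6*ni-5)^2 \<le> (D-2)^2" using a n3 by (intro power_mono) auto
    moreover have "0 \<le> (ni-3)*(36*ni-24)" using n3 by (intro mult_nonneg_nonneg) auto
    moreover have "(6*ni-5)^2 - 12*(6*ni-4) = (ni-3)*(36*ni-24) + 1" by algebra
    ultimately show False using D3 by arith
  qed
  have pn: "p \<le> ni - 1" using Dr r0 D6 by arith
  have key: "c \<le> (D - 3*p)*p"
  proof -
    have e0: "D - 6*p = rho - 1" using Dr by simp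
    have e1: "12*((D-3*p)*p) = D^2 - (rho - 1)^2" using e0 by algebra
    have "(rho - 1)^2 \<le> 9" using rcases by auto
    hence "12*((D-3*p)*p) - 12*c \<ge> -9" using e1 D2 c_def by arith
    then show ?thesis by arith
  qed
  have fK: "2*mi+1 \<le> K"
    using rcases
  proof (elim disjE)
    assume "rho = 0" then show ?thesis using Dr pn unfolding K_def mi_def by arith
  next
    assume "rho = 2" then show ?thesis using Dr pn unfolding K_def mi_def by arith
  next
    assume "rho = 4" 
    hence "6*p \<le> 6*ni - 8" using Dr D6 by arith
    hence "p \<le> ni - 2" by arith
    then show ?thesis using Dr \<open>rho = 4\<close> unfolding K_def mi_def by arith
  qed
  have KL: "K \<le> L"
  proof -
    have "L - K = (D - 3*p)*p - c" unfolding L_def K_def c_def by algebra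
    then show ?thesis using key by arith
  qed
  have Kq: "K \<le> q" unfolding K_def q_def mi_def using pn D0 Dr r0 by arith
  have oK: "odd K" unfolding K_def using Dodd by simp
  have oL: "odd L"
  proof -
    have "L = (12*ni-6-3*p)*p - (6*ni-4) - (p-1)*K" by (simp add: L_def)
    then show ?thesis using oK by (auto simp: even_mult_iff)
  qed
  have sumeq: "(p-1)*K + L + (ni-p)*q = mi^2" unfolding L_def q_def mi_def by algebra
  have m1: "1 \<le> mi" unfolding mi_def using pn n3 by arith
  have mp: "4*ni - p = mi + 2" unfolding mi_def by simp
  show ?thesis using p2 pn m1 oK oL fK KL Kq sumeq mp by blast
qed

lemma construct:
  fixes n :: nat and D :: int
  assumes n3: "3 \<le> n" and Dodd: "odd D" and D0: "0 \<le> D" and D2: "12*(6*int n-4) \<le> D^2"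
    and D3: "(D-2)^2 < 12*(6*int n-4)"
  shows "\<exists>m ls. path_forest n ls \<and> impossibly_burnable m ls \<and> int (hd ls) = 12*int n-6-D"
proof -
  define ni where "ni = int n"
  define K where "K = 12*ni-6-D"
  define p where "p = (D+1) div 6"
  define mi where "mi = 4*ni-2-p"
  define L where "L = (12*ni-6-3*p)*p - (6*ni-4) - (p-1)*K"
  define q where "q = 4*mi-2"
  have n3i: "3 \<le> ni" using n3 ni_def by simp
  have C: "2 \<le> p \<and> p \<le> ni - 1 \<and> 1 \<le> mi \<and> odd K \<and> odd L \<and> 2*mi+1 \<le> K \<and> K \<le> L \<and> K \<le> q
     \<and> (p-1)*K + L + (ni-p)*q = mi^2 \<and> 4*ni - p = mi + 2"
    unfolding K_def p_def mi_def L_def q_def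
    by (rule construct_int[OF n3i Dodd D0 D2[folded ni_def] D3[folded ni_def]])
  define Kn where "Kn = nat K"
  define Ln where "Ln = nat L"
  define qn where "qn = nat q"
  define mn where "mn = nat mi"
  define pn where "pn = nat p"
  have iK: "int Kn = K" and iL: "int Ln = L" and iq: "int qn = q" and im: "int mn = mi" and ip: "int pn = p"
    using C unfolding Kn_def Ln_def qn_def mn_def pn_def by auto
  have pn2: "2 \<le> pn" and pnn: "pn \<le> n - 1" using C ip ni_def by auto
  have mn1: "1 \<le> mn" using C im by simp
  define ls where "ls = replicate (pn - 1) Kn @ insort Ln (replicate (n - pn) qn)"
  have hd: "hd ls = Kn" unfolding ls_def using pn2 by (cases "pn - 1") auto
  have len: "length ls = n" unfolding ls_def using pn2 pnn by (simp add: length_insort)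
  have KL: "Kn \<le> Ln" and Kq: "Kn \<le> qn" using C iK iL iq by auto
  have K1: "1 \<le> Kn" using C iK im by simp
  have srt: "sorted ls" unfolding ls_def using KL Kq by (auto simp: sorted_append sorted_insort set_insort_key)
  have setls: "set ls \<subseteq> {Kn, Ln, qn}" unfolding ls_def by (auto simp: set_insort_key)
  have pos: "\<forall>l\<in>set ls. 1 \<le> l" using setls KL Kq K1 by auto
  have pf: "path_forest n ls" unfolding path_forest_def using len srt pos by auto
  have sumls: "sum_list ls = (pn - 1)*Kn + Ln + (n - pn)*qn" unfolding ls_def by (simp add: sum_insort2 sum_list_replicate)
  have "int ((pn - 1)*Kn + Ln + (n - pn)*qn) = (p-1)*K + L + (ni-p)*q"
    using pn2 pnn iK iL iq ip ni_def by (simp add: of_nat_diff)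
  hence "int (sum_list ls) = int (mn^2)" using sumls C im by simp
  hence sm: "sum_list ls = mn^2" by (simp only: of_nat_eq_iff)
  have Lm: "Ln \<le> mn^2" using sumls sm by simp
  have qm: "qn \<le> mn^2"
  proof -
    have "1 \<le> n - pn" using pnn n3 by arith
    hence "1*qn \<le> (n - pn)*qn" by (intro mult_right_mono) auto
    then show ?thesis using sumls sm by linarith
  qed
  have Km: "Kn \<le> mn^2" using KL Lm by simp
  have m0: "0 < mn" using mn1 by simp
  have BK: "3 \<le> B mn Kn"
    by (rule B_ge3[OF m0 _ _ Km]) (use C iK im in \<open>auto simp: even_of_nat[symmetric]\<close>)
  have BL: "3 \<le> B mn Ln"
    by (rule B_ge3[OF m0 _ _ Lm]) (use C iL iK im in \<open>auto simp: even_of_nat[symmetric]\<close>)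
  have Bq: "4 \<le> B mn qn"
  proof (rule B_ge4[OF m0 _ _ qm])
    have "even q" unfolding q_def by simp
    hence "even (int qn)" using iq by simp
    then show "even qn" by simp
    show "4*mn - 2 \<le> qn" using iq im q_def by linarith
    show "1 \<le> qn" using Kq K1 by simp
  qed
  have sB: "sum_list (map (B mn) ls) = (pn - 1)*B mn Kn + B mn Ln + (n - pn)*B mn qn"
    unfolding ls_def by (simp add: sum_insort sum_list_replicate)
  have "(pn - 1)*3 \<le> (pn - 1)*B mn Kn" using BK by simp
  moreover have "(n - pn)*4 \<le> (n - pn)*B mn qn" using Bq by simp
  moreover have "int ((pn - 1)*3 + 3 + (n - pn)*4) = int mn + 2" using C ip im ni_def pn2 pnn by (simp add: of_nat_diff algebra_simps)
  ultimately have "mn < sum_list (map (B mn) ls)" using sB BL by linarith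
  hence ib: "impossibly_burnable mn ls" unfolding impossibly_burnable_def using m0 sm by auto
  have "int (hd ls) = 12*int n-6-D" using hd iK K_def ni_def by simp
  then show ?thesis using pf ib by blast
qed



theorem theorem2:
  fixes n :: nat
  assumes "3 \<le> n"
  shows "int (M n) = (GREATEST k::int. odd k \<and>
           real_of_int k \<le> 12 * real n - 2 * sqrt (18 * real n - 12) - 6)"
proof -
  define ni where "ni = int n"
  have n3i: "3 \<le> ni" using assms ni_def by simp
  define Sp where "Sp = (\<lambda>k::int. odd k \<and> real_of_int k \<le> 12 * real n - 2 * sqrt (18 * real n - 12) - 6)"
  have SpI: "\<And>k. Sp k \<longleftrightarrow> odd k \<and> 0 \<le> 12*ni-6-k \<and> 12*(6*ni-4) \<le> (12*ni-6-k)^2"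
  proof -
    fix k
    have "real n = real_of_int ni" using ni_def by simp
    then show "Sp k \<longleftrightarrow> odd k \<and> 0 \<le> 12*ni-6-k \<and> 12*(6*ni-4) \<le> (12*ni-6-k)^2"
      unfolding Sp_def using bound_iff[of ni k] n3i by simp
  qed
  have wit: "\<And>k p. odd k \<Longrightarrow> 1 \<le> p \<Longrightarrow> p*k \<le> (12*ni-6-3*p)*p - (6*ni-4) \<Longrightarrow> Sp k"
  proof -
    fix k p :: int assume o: "odd k" and p1: "1 \<le> p" and w: "p*k \<le> (12*ni-6-3*p)*p - (6*ni-4)"
    have "0 \<le> 12*ni-6-k \<and> 12*(6*ni-4) \<le> (12*ni-6-k)^2"
      by (rule witness_bound[OF _ p1 w]) (use n3i in simp)
    then show "Sp k" using SpI o by simp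
  qed
  have Sp1: "Sp 1"
  proof (rule wit[of 1 2])
    show "odd (1::int)" by simp
    show "(1::int) \<le> 2" by simp
    show "2*1 \<le> (12*ni-6-3*2)*2 - (6*ni-4)" using n3i by simp
  qed
  define Fin where "Fin = {k. Sp k \<and> 1 \<le> k}"
  have finFin: "finite Fin"
  proof (rule finite_subset)
    show "Fin \<subseteq> {1..12*ni}"
    proof
      fix k assume "k \<in> Fin"
      hence "Sp k" "1 \<le> k" unfolding Fin_def by auto
      hence "0 \<le> 12*ni-6-k" using SpI by blast
      then show "k \<in> {1..12*ni}" using \<open>1 \<le> k\<close> by simp
    qed
  qed simp
  have Fin1: "1 \<in> Fin" unfolding Fin_def using Sp1 by simp
  define K where "K = Max Fin"
  have KF: "K \<in> Fin" unfolding K_def using finFin Fin1 by (intro Max_in) auto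
  have SpK: "Sp K" and K1: "1 \<le> K" using KF Fin_def by auto
  have Kmax: "\<And>k. Sp k \<Longrightarrow> k \<le> K"
  proof -
    fix k assume "Sp k"
    show "k \<le> K"
    proof (cases "1 \<le> k")
      case True
      hence "k \<in> Fin" using \<open>Sp k\<close> Fin_def by simp
      then show ?thesis unfolding K_def using finFin by simp
    next
      case False then show ?thesis using K1 by simp
    qed
  qed
  have G: "(GREATEST k::int. odd k \<and> real_of_int k \<le> 12 * real n - 2 * sqrt (18 * real n - 12) - 6) = K"
    using SpK Kmax unfolding Sp_def by (intro Greatest_equality) auto
  have up: "\<And>m ls. path_forest n ls \<and> impossibly_burnable m ls \<longrightarrow> hd ls \<le> nat K"
  proof (intro impI)
    fix m ls assume h: "path_forest n ls \<and> impossibly_burnable m ls"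
    obtain p :: int where p: "1 \<le> p" "p*(int (hd ls) + (if even (int (hd ls)) then 1 else 0)) \<le> (12*int n-6-3*p)*p - (6*int n-4)"
      using upper[OF assms] h by blast
    have "odd (int (hd ls) + (if even (int (hd ls)) then 1 else 0))" by auto
    hence "Sp (int (hd ls) + (if even (int (hd ls)) then 1 else 0))"
      by (rule wit[OF _ p(1) p(2)[folded ni_def]])
    hence "int (hd ls) + (if even (int (hd ls)) then 1 else 0) \<le> K" by (rule Kmax)
    hence "int (hd ls) \<le> K" by (auto split: if_splits)
    then show "hd ls \<le> nat K" by simp
  qed
  have low: "\<And>b. 0 < b \<and> (\<forall>m ls. path_forest n ls \<and> impossibly_burnable m ls \<longrightarrow> hd ls \<le> b) \<Longrightarrow> nat K \<le> b"
  proof -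
    fix b assume hb: "0 < b \<and> (\<forall>m ls. path_forest n ls \<and> impossibly_burnable m ls \<longrightarrow> hd ls \<le> b)"
    define D where "D = 12*ni-6-K"
    have SK: "odd K \<and> 0 \<le> D \<and> 12*(6*ni-4) \<le> D^2" using SpK SpI D_def by auto
    have D13: "13 \<le> D"
    proof (rule ccontr)
      assume "\<not> 13 \<le> D" hence "D \<le> 12" by simp
      hence "D^2 \<le> 12^2" using SK by (intro power_mono) auto
      then show False using SK n3i by simp
    qed
    have nS: "\<not> Sp (K+2)" using Kmax[of "K+2"] by arith
    have D3: "(D-2)^2 < 12*(6*ni-4)"
    proof -
      have "odd (K+2)" using SK by simp
      moreover have "0 \<le> 12*ni-6-(K+2)" using D13 D_def by simp
      ultimately have "\<not> 12*(6*ni-4) \<le> (12*ni-6-(K+2))^2" using nS SpI by blast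
      moreover have "12*ni-6-(K+2) = D - 2" using D_def by simp
      ultimately show ?thesis by simp
    qed
    have Dodd: "odd D" using SK D_def by simp
    obtain m ls where mls: "path_forest n ls" "impossibly_burnable m ls" "int (hd ls) = 12*int n-6-D"
      using construct[OF assms Dodd _ _ D3[unfolded ni_def]] SK ni_def by blast
    have "int (hd ls) = K" using mls(3) D_def ni_def by simp
    moreover have "hd ls \<le> b" using hb mls by blast
    ultimately show "nat K \<le> b" by simp
  qed
  have "M n = nat K" unfolding M_def
    by (rule Least_equality) (use up low K1 in auto)
  then show ?thesis using G K1 by simp
qed


end
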